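(* For all integers $n\ge 1$ and $q\ge 3$ there exists a quasi-complementary Hamming metric Gray code of $q$-ary $n$-tuples.
   Context: The Hamming distance between two words is the number of coordinates in which they differ. A quasi-complementary Hamming metric Gray code of $q$-ary $n$-tuples is an ordering $G(0),\ldots,G(q^n-1)$ of all words of $\mathbb{Z}_q^n$ such that consecutive words $G(i),G(i+1)$ ($0\le i<q^n-1$) have Hamming distance $1$ and $G((i+q^{n-1})\bmod q^n)=G(i)+(1,1,\ldots,1)$ for all $i$, with addition in $\mathbb{Z}_q^n$. *)

theory Defs
  imports Main
begin

text \<open>Words of Z_q^n are represented as functions nat => nat with entries in {0..<q}
  on the coordinates {0..<n} and equal to 0 outside.\<close>

definition words :: "nat \<Rightarrow> nat \<Rightarrow> (nat \<Rightarrow> nat) set" where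
  "words q n = {w. (\<forall>i<n. w i < q) \<and> (\<forall>i\<ge>n. w i = 0)}"

definition hamming_dist :: "nat \<Rightarrow> (nat \<Rightarrow> nat) \<Rightarrow> (nat \<Rightarrow> nat) \<Rightarrow> nat" where
  "hamming_dist n u v = card {i. i < n \<and> u i \<noteq> v i}"

definition add_ones :: "nat \<Rightarrow> nat \<Rightarrow> (nat \<Rightarrow> nat) \<Rightarrow> (nat \<Rightarrow> nat)" where
  "add_ones q n w = (\<lambda>i. if i < n then (w i + 1) mod q else 0)"

definition quasi_compl_gray_code :: "nat \<Rightarrow> nat \<Rightarrow> (nat \<Rightarrow> (nat \<Rightarrow> nat)) \<Rightarrow> bool" where
  "quasi_compl_gray_code q n G \<longleftrightarrow>
     bij_betw G {..<q ^ n} (words q n) \<and>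
     (\<forall>i. i + 1 < q ^ n \<longrightarrow> hamming_dist n (G i) (G (i + 1)) = 1) \<and>
     (\<forall>i<q ^ n. G ((i + q ^ (n - 1)) mod q ^ n) = add_ones q n (G i))"

end

theory Submission
  imports Defs "HOL-Number_Theory.Cong"
begin

definition sig :: "nat \<Rightarrow> nat \<Rightarrow> nat" where
  "sig q t = (if t = 0 then 0 else if t = q - 1 then 1 else t + 1)"
definition rho :: "nat \<Rightarrow> nat \<Rightarrow> nat" where
  "rho q t = (if t \<le> 1 then t else if t = q - 1 then 2 else t + 1)"
definition Y :: "nat \<Rightarrow> nat \<Rightarrow> nat \<Rightarrow> nat \<Rightarrow> nat" where
  "Y q M j t = (if M = 1 then sig q t else if j = 0 then rho q t else (j + 1 + sig q t) mod q)"
definition ones :: "nat \<Rightarrow> nat \<Rightarrow> nat" where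
  "ones m = (\<lambda>i. if i < m then 1 else 0)"

lemma sig_range: "q \<ge> 3 \<Longrightarrow> t < q \<Longrightarrow> sig q t < q"
  by (auto simp: sig_def)

lemma add_mod_cancel:
  fixes a b c q :: nat
  assumes "a < q" "b < q" "(c + a) mod q = (c + b) mod q"
  shows "a = b"
proof -
  have "a mod q = b mod q"
    using assms(3) using cong_add_lcancel_nat[of c a b q] unfolding cong_def by simp
  then show ?thesis using assms by simp
qed

lemma sig_inj: "a < q \<Longrightarrow> b < q \<Longrightarrow> q \<ge> 3 \<Longrightarrow> sig q a = sig q b \<Longrightarrow> a = b"
  unfolding sig_def by (cases "a = 0"; cases "b = 0"; cases "a = q - 1"; cases "b = q - 1") auto
lemma rho_inj: "a < q \<Longrightarrow> b < q \<Longrightarrow> q \<ge> 3 \<Longrightarrow> rho q a = rho q b \<Longrightarrow> a = b"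
  unfolding rho_def by (cases "a \<le> 1"; cases "b \<le> 1"; cases "a = q - 1"; cases "b = q - 1") auto

lemma Y_range: "q \<ge> 3 \<Longrightarrow> t < q \<Longrightarrow> Y q M j t < q"
  by (auto simp: Y_def sig_def rho_def)

lemma Y_inj: assumes "q \<ge> 3" shows "inj_on (Y q M j) {..<q}"
proof (rule inj_onI)
  fix a b assume a: "a \<in> {..<q}" and b: "b \<in> {..<q}" and e: "Y q M j a = Y q M j b"
  have si: "sig q a = sig q b \<Longrightarrow> a = b" using a b assms sig_inj by simp
  show "a = b"
  proof (cases "M = 1")
    case True then show ?thesis using e si by (simp add: Y_def)
  next
    case False
    show ?thesis
    proof (cases "j = 0")
      case True then show ?thesis using e False a b assms rho_inj by (simp add: Y_def)
    next
      case F2: False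
      then have "(j + 1 + sig q a) mod q = (j + 1 + sig q b) mod q" using e False by (simp add: Y_def)
      then have "sig q a = sig q b" using add_mod_cancel sig_range a b assms by blast
      then show ?thesis using si by simp
    qed
  qed
qed

lemma Y_surj: assumes "q \<ge> 3" shows "Y q M j ` {..<q} = {..<q}"
  by (rule endo_inj_surj) (use Y_range[OF assms] Y_inj[OF assms] in auto)

lemma words_upd:
  assumes "w \<in> words q (Suc m)" shows "w(m := 0) \<in> words q m"
  using assms by (auto simp: words_def)

lemma step:
  assumes q: "q \<ge> 3"
  and bij: "bij_betw H {..<q^m} (words q m)"
  and adj: "\<forall>i. i + 1 < q^m \<longrightarrow> hamming_dist m (H i) (H (i+1)) = 1"
  and h0: "H 0 = (\<lambda>_. 0)" and hend: "H (q^m - 1) = ones m"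
  shows "\<exists>H'. bij_betw H' {..<q^Suc m} (words q (Suc m)) \<and>
    (\<forall>i. i + 1 < q^Suc m \<longrightarrow> hamming_dist (Suc m) (H' i) (H' (i+1)) = 1) \<and>
    H' 0 = (\<lambda>_. 0) \<and> H' (q^Suc m - 1) = ones (Suc m)"
proof -
  define M where "M = q^m"
  define H' where "H' = (\<lambda>i. (H (i div q))(m := Y q M (i div q) (i mod q)))"
  have qpos: "q > 0" using q by simp
  have Mpos: "M > 0" using qpos by (simp add: M_def)
  have Hw: "\<And>j. j < M \<Longrightarrow> H j \<in> words q m" using bij unfolding M_def bij_betw_def by auto
  have Hm: "\<And>j k. j < M \<Longrightarrow> k \<ge> m \<Longrightarrow> H j k = 0" using Hw unfolding words_def by auto
  have divlt: "\<And>i. i < q^Suc m \<Longrightarrow> i div q < M"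
    by (simp add: M_def less_mult_imp_div_less mult.commute)
  have H'restr: "\<And>i. i < q^Suc m \<Longrightarrow> (H' i)(m := 0) = H (i div q)"
    using Hm divlt unfolding H'_def by (auto simp: fun_eq_iff)
  have inj: "inj_on H' {..<q^Suc m}"
  proof (rule inj_onI)
    fix i i' assume i: "i \<in> {..<q^Suc m}" and i': "i' \<in> {..<q^Suc m}" and e: "H' i = H' i'"
    have "H (i div q) = H (i' div q)" using H'restr[of i] H'restr[of i'] i i' e by simp
    then have d: "i div q = i' div q"
      using bij divlt i i' unfolding bij_betw_def inj_on_def M_def by auto
    have "Y q M (i div q) (i mod q) = Y q M (i div q) (i' mod q)"
      using e d unfolding H'_def by (metis fun_upd_same)
    then have "i mod q = i' mod q" using Y_inj[OF q] qpos unfolding inj_on_def by auto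
    then show "i = i'" using d by (metis div_mult_mod_eq)
  qed
  have img: "H' ` {..<q^Suc m} = words q (Suc m)"
  proof
    show "H' ` {..<q^Suc m} \<subseteq> words q (Suc m)"
    proof
      fix w assume "w \<in> H' ` {..<q^Suc m}"
      then obtain i where i: "i < q^Suc m" and w: "w = H' i" by auto
      have "H (i div q) \<in> words q m" using Hw divlt i by auto
      moreover have "Y q M (i div q) (i mod q) < q" using Y_range[OF q] qpos by simp
      ultimately show "w \<in> words q (Suc m)" unfolding w H'_def words_def by auto
    qed
  next
    show "words q (Suc m) \<subseteq> H' ` {..<q^Suc m}"
    proof
      fix w assume w: "w \<in> words q (Suc m)"
      have "w(m := 0) \<in> H ` {..<M}" using words_upd[OF w] bij unfolding bij_betw_def M_def by simp
      then obtain j where j: "j < M" and hj: "H j = w(m := 0)" by auto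
      have "w m < q" using w unfolding words_def by auto
      then have "w m \<in> Y q M j ` {..<q}" using Y_surj[OF q] by auto
      then obtain t where t: "t < q" and ht: "Y q M j t = w m" by auto
      define i where "i = j * q + t"
      have idiv: "i div q = j" and imod: "i mod q = t" using t by (auto simp: i_def)
      have "i < q^Suc m"
      proof -
        have "i < j * q + q" using t by (simp add: i_def)
        also have "\<dots> = (j + 1) * q" by simp
        also have "\<dots> \<le> M * q" using j by (intro mult_right_mono) auto
        finally show ?thesis by (simp add: M_def mult.commute)
      qed
      moreover have "H' i = w" unfolding H'_def idiv imod hj ht by (simp add: fun_eq_iff)
      ultimately show "w \<in> H' ` {..<q^Suc m}" by blast
    qed
  qed
  have adj': "\<forall>i. i + 1 < q^Suc m \<longrightarrow> hamming_dist (Suc m) (H' i) (H' (i+1)) = 1"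
  proof (intro allI impI)
    fix i assume i1: "i + 1 < q^Suc m"
    show "hamming_dist (Suc m) (H' i) (H' (i+1)) = 1"
    proof (cases "Suc (i mod q) = q")
      case False
      have d: "(i+1) div q = i div q" and md: "(i+1) mod q = i mod q + 1"
        using False by (simp_all add: div_Suc mod_Suc)
      have "i mod q + 1 < q" using False qpos mod_less_divisor[of q i] by linarith
      have ne: "Y q M (i div q) (i mod q) \<noteq> Y q M (i div q) (i mod q + 1)"
      proof
        assume "Y q M (i div q) (i mod q) = Y q M (i div q) (i mod q + 1)"
        then have "i mod q = i mod q + 1"
          using inj_onD[OF Y_inj[OF q]] \<open>i mod q + 1 < q\<close> by simp
        then show False by simp
      qed
      have "{k. k < Suc m \<and> H' i k \<noteq> H' (i+1) k} = {m}"
        using ne unfolding H'_def d md by auto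
      then show ?thesis unfolding hamming_dist_def by simp
    next
      case True
      have d: "(i+1) div q = i div q + 1" and md: "(i+1) mod q = 0" and mq: "i mod q = q - 1"
        using True by (simp_all add: div_Suc mod_Suc)
      have jl: "i div q + 1 < M" using divlt[OF i1] d by simp
      then have M1: "M \<noteq> 1" by simp
      have yeq: "Y q M (i div q) (q - 1) = Y q M (i div q + 1) 0"
        using M1 q by (auto simp: Y_def sig_def rho_def)
      have "{k. k < Suc m \<and> H' i k \<noteq> H' (i+1) k} = {k. k < m \<and> H (i div q) k \<noteq> H (i div q + 1) k}"
        using yeq unfolding H'_def d md mq by (auto simp: less_Suc_eq)
      moreover have "hamming_dist m (H (i div q)) (H (i div q + 1)) = 1"
        using adj jl unfolding M_def by simp
      ultimately show ?thesis unfolding hamming_dist_def by simp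
    qed
  qed
  have z: "H' 0 = (\<lambda>_. 0)"
    unfolding H'_def using h0 q by (auto simp: fun_eq_iff Y_def sig_def rho_def)
  have e: "H' (q^Suc m - 1) = ones (Suc m)"
  proof -
    have qs: "q^Suc m - 1 = (M - 1) * q + (q - 1)"
      using qpos Mpos by (simp add: M_def algebra_simps)
    obtain r where r: "r = q - 1" "r < q" using qpos by simp
    have dv: "(q^Suc m - 1) div q = M - 1" and md: "(q^Suc m - 1) mod q = q - 1"
      unfolding qs r(1)[symmetric] using r(2) by simp_all
    have "Y q M (M - 1) (q - 1) = 1"
    proof (cases "m = 0")
      case True then show ?thesis using q by (simp add: M_def Y_def sig_def)
    next
      case False
      have "q ^ 1 \<le> q ^ m" using False q by (intro power_increasing) auto
      then have M1: "M \<noteq> 1" "M - 1 \<noteq> 0" using q False by (simp_all add: M_def)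
      have "q dvd M" using False by (simp add: M_def)
      then have "M mod q = 0" by simp
      then have "(M + 1) mod q = 1" using q by (simp add: mod_Suc)
      moreover have "M - 1 + 1 + 1 = M + 1" using Mpos by simp
      ultimately have "(M - 1 + 1 + 1) mod q = 1" by simp
      then show ?thesis using M1 q by (simp add: Y_def sig_def)
    qed
    then show ?thesis unfolding H'_def dv md hend[folded M_def] by (auto simp: ones_def fun_eq_iff)
  qed
  have b: "bij_betw H' {..<q^Suc m} (words q (Suc m))" unfolding bij_betw_def using inj img by simp
  show ?thesis by (rule exI[of _ H'], intro conjI b adj' z e)
qed

lemma path_exists:
  assumes q: "q \<ge> 3"
  shows "\<exists>H. bij_betw H {..<q^m} (words q m) \<and>
    (\<forall>i. i + 1 < q^m \<longrightarrow> hamming_dist m (H i) (H (i+1)) = 1) \<and>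
    H 0 = (\<lambda>_. 0) \<and> H (q^m - 1) = ones m"
proof (induction m)
  case 0
  have w: "words q 0 = {(\<lambda>_::nat. 0::nat)}"
  proof (intro equalityI subsetI)
    fix w assume "w \<in> words q 0"
    then have "\<forall>i. w i = 0" unfolding words_def by simp
    then have "w = (\<lambda>_. 0)" by (intro ext) simp
    then show "w \<in> {(\<lambda>_. 0)}" by simp
  next
    fix w assume "w \<in> {(\<lambda>_::nat. 0::nat)}"
    then show "w \<in> words q 0" unfolding words_def by simp
  qed
  have "bij_betw (\<lambda>_ _. 0::nat) {..<q^0} (words q 0)"
    unfolding w by (simp add: bij_betw_def lessThan_Suc)
  moreover have "ones 0 = (\<lambda>_. 0)" by (simp add: ones_def)
  ultimately show ?case by auto
next
  case (Suc m)
  then obtain H where "bij_betw H {..<q^m} (words q m)"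
    "\<forall>i. i + 1 < q^m \<longrightarrow> hamming_dist m (H i) (H (i+1)) = 1"
    "H 0 = (\<lambda>_. 0)" "H (q^m - 1) = ones m" by blast
  from step[OF q this] show ?case .
qed

theorem corollary3:
  fixes n q :: nat
  assumes "n \<ge> 1" and "q \<ge> 3"
  shows "\<exists>G. quasi_compl_gray_code q n G"
proof -
  have q: "q \<ge> 3" by fact
  obtain m where n: "n = Suc m" using assms(1) by (cases n) auto
  define M where "M = q^m"
  obtain H where bij: "bij_betw H {..<M} (words q m)"
    and adj: "\<forall>i. i + 1 < M \<longrightarrow> hamming_dist m (H i) (H (i+1)) = 1"
    and h0: "H 0 = (\<lambda>_. 0)" and hend: "H (M - 1) = ones m"
    using path_exists[OF q, of m] unfolding M_def by blast
  define G where "G = (\<lambda>i k. if k < m then (H (i mod M) k + i div M) mod q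
      else if k = m then (i div M) mod q else 0)"
  have qpos: "q > 0" using q by simp
  have Mpos: "M > 0" using qpos by (simp add: M_def)
  have N: "q ^ n = q * M" by (simp add: n M_def)
  have nm: "n - 1 = m" by (simp add: n)
  have Hw: "\<And>j. j < M \<Longrightarrow> H j \<in> words q m" using bij unfolding bij_betw_def by auto
  have Hlt: "\<And>j k. j < M \<Longrightarrow> H j k < q"
  proof -
    fix j k assume "j < M"
    then have "H j \<in> words q m" by (rule Hw)
    then show "H j k < q" unfolding words_def using qpos by (cases "k < m") auto
  qed
  have Hm: "\<And>j k. j < M \<Longrightarrow> k \<ge> m \<Longrightarrow> H j k = 0" using Hw unfolding words_def by auto
  have cdiv: "\<And>i. i < q * M \<Longrightarrow> i div M < q"
    by (simp add: less_mult_imp_div_less)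
  have jmod: "\<And>i. i mod M < M" using Mpos by simp
  have inj: "inj_on G {..<q^n}"
  proof (rule inj_onI)
    fix i i' assume i: "i \<in> {..<q^n}" and i': "i' \<in> {..<q^n}" and e: "G i = G i'"
    have ci: "i div M < q" and ci': "i' div M < q" using i i' cdiv N by auto
    have "G i m = G i' m" using e by simp
    then have c: "i div M = i' div M" using ci ci' unfolding G_def by simp
    have "H (i mod M) = H (i' mod M)"
    proof
      fix k show "H (i mod M) k = H (i' mod M) k"
      proof (cases "k < m")
        case True
        have "(i div M + H (i mod M) k) mod q = (i div M + H (i' mod M) k) mod q"
          using fun_cong[OF e, of k] True c unfolding G_def by (simp add: add.commute)
        then show ?thesis using add_mod_cancel Hlt jmod by blast
      next
        case False then show ?thesis using Hm jmod by simp
      qed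
    qed
    then have "i mod M = i' mod M" using bij jmod unfolding bij_betw_def inj_on_def by blast
    then show "i = i'" using c by (metis div_mult_mod_eq)
  qed
  have img: "G ` {..<q^n} = words q n"
  proof
    show "G ` {..<q^n} \<subseteq> words q n"
      using qpos unfolding G_def words_def n by auto
  next
    show "words q n \<subseteq> G ` {..<q^n}"
    proof
      fix w assume w: "w \<in> words q n"
      define c where "c = w m"
      have cq: "c < q" using w unfolding words_def c_def n by auto
      define v where "v = (\<lambda>k. if k < m then (w k + (q - c)) mod q else 0)"
      have "v \<in> words q m" unfolding v_def words_def using qpos by auto
      then obtain j where j: "j < M" and hj: "H j = v" using bij unfolding bij_betw_def by force
      define i where "i = c * M + j"
      have idiv: "i div M = c" and imod: "i mod M = j" using j by (simp_all add: i_def)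
      have "i < q * M"
      proof -
        have "i < c * M + M" using j by (simp add: i_def)
        also have "\<dots> = (c + 1) * M" by simp
        also have "\<dots> \<le> q * M" using cq by (intro mult_right_mono) auto
        finally show ?thesis .
      qed
      moreover have "G i = w"
      proof
        fix k
        show "G i k = w k"
        proof (cases "k < m")
          case True
          have wk: "w k < q" using w True unfolding words_def n by auto
          have "G i k = ((w k + (q - c)) mod q + c) mod q" using True unfolding G_def idiv imod hj v_def by simp
          also have "\<dots> = (w k + (q - c) + c) mod q" by (simp add: mod_add_left_eq)
          also have "w k + (q - c) + c = w k + q" using cq by simp
          finally show ?thesis using wk by simp
        next
          case False
          then show ?thesis using w cq unfolding G_def idiv c_def words_def n by auto
        qed
      qed
      ultimately show "w \<in> G ` {..<q^n}" using N by auto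
    qed
  qed
  have adj': "\<forall>i. i + 1 < q^n \<longrightarrow> hamming_dist n (G i) (G (i+1)) = 1"
  proof (intro allI impI)
    fix i assume i1: "i + 1 < q^n"
    have c1: "(i+1) div M < q" using i1 cdiv N by simp
    show "hamming_dist n (G i) (G (i+1)) = 1"
    proof (cases "Suc (i mod M) = M")
      case False
      have d: "(i+1) div M = i div M" and md: "(i+1) mod M = i mod M + 1"
        using False by (simp_all add: div_Suc mod_Suc)
      have jl: "i mod M + 1 < M" using False jmod[of i] by linarith
      have "{k. k < n \<and> G i k \<noteq> G (i+1) k} = {k. k < m \<and> H (i mod M) k \<noteq> H (i mod M + 1) k}"
      proof -
        have "\<And>k. k < m \<Longrightarrow> (G i k \<noteq> G (i+1) k) = (H (i mod M) k \<noteq> H (i mod M + 1) k)"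
        proof -
          fix k assume k: "k < m"
          have a: "H (i mod M) k < q" "H (i mod M + 1) k < q" using Hlt jl jmod by auto
          have "G i k = (i div M + H (i mod M) k) mod q" "G (i+1) k = (i div M + H (i mod M + 1) k) mod q"
            using k unfolding G_def d md by (simp_all add: add.commute)
          then show "(G i k \<noteq> G (i+1) k) = (H (i mod M) k \<noteq> H (i mod M + 1) k)"
            using add_mod_cancel[OF a] by auto
        qed
        moreover have "G i m = G (i+1) m" unfolding G_def d by simp
        ultimately show ?thesis unfolding n by (auto simp: less_Suc_eq)
      qed
      moreover have "hamming_dist m (H (i mod M)) (H (i mod M + 1)) = 1" using adj jl by simp
      ultimately show ?thesis unfolding hamming_dist_def by simp
    next
      case True
      have d: "(i+1) div M = i div M + 1" and md: "(i+1) mod M = 0" and mq: "i mod M = M - 1"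
        using True by (simp_all add: div_Suc mod_Suc)
      have "{k. k < n \<and> G i k \<noteq> G (i+1) k} = {m}"
      proof -
        have "\<And>k. k < m \<Longrightarrow> G i k = G (i+1) k"
          unfolding G_def d md mq hend h0 by (simp add: ones_def)
        moreover have "G i m \<noteq> G (i+1) m" using c1 d unfolding G_def by simp
        ultimately show ?thesis unfolding n by (auto simp: less_Suc_eq)
      qed
      then show ?thesis unfolding hamming_dist_def by simp
    qed
  qed
  have compl: "\<forall>i<q ^ n. G ((i + q ^ (n - 1)) mod q ^ n) = add_ones q n (G i)"
  proof (intro allI impI)
    fix i assume i: "i < q^n"
    have ci: "i div M < q" using i cdiv N by simp
    show "G ((i + q ^ (n - 1)) mod q ^ n) = add_ones q n (G i)"
    proof (cases "i div M + 1 < q")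
      case True
      have "i + M < q * M"
      proof -
        have "i = i div M * M + i mod M" by simp
        then have "i < i div M * M + M" using jmod[of i] by linarith
        then have "i < (i div M + 1) * M" by (simp add: algebra_simps)
        then have "i + M < (i div M + 2) * M" by simp
        also have "\<dots> \<le> q * M" using True by (intro mult_right_mono) auto
        finally show ?thesis .
      qed
      then have e1: "(i + q ^ (n - 1)) mod q ^ n = i + M" unfolding nm N by (simp add: M_def)
      have d: "(i + M) div M = i div M + 1" and md: "(i + M) mod M = i mod M" using Mpos div_add_self2[of M i] by simp_all
      show ?thesis unfolding e1
      proof
        fix k show "G (i + M) k = add_ones q n (G i) k"
          unfolding G_def add_ones_def d md n
          by (auto simp: mod_add_left_eq add.assoc mod_Suc_eq)
      qed
    next
      case False
      then have c: "i div M = q - 1" using ci by simp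
      define j where "j = i mod M"
      have ij: "i = (q - 1) * M + j" using c div_mult_mod_eq[of i M] unfolding j_def by simp
      have m1: "(q - 1) * M = q * M - 1 * M" by (simp add: diff_mult_distrib)
      have m2: "M \<le> q * M" using qpos by simp
      have "i + M = q * M + j" unfolding ij using m1 m2 by linarith
      then have "(i + q ^ (n - 1)) mod q ^ n = (q * M + j) mod (q * M)" unfolding nm N M_def by simp
      also have "\<dots> = j"
      proof -
        have "j < q * M" using jmod[of i] m2 j_def by linarith
        then show ?thesis by simp
      qed
      finally have e1: "(i + q ^ (n - 1)) mod q ^ n = j" .
      have jl: "j < M" using jmod j_def by simp
      have d: "j div M = 0" and md: "j mod M = j" using jl by simp_all
      show ?thesis unfolding e1
      proof
        fix k show "G j k = add_ones q n (G i) k"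
        proof (cases "k < m")
          case True
          have hq: "H j k < q" using Hlt jl by simp
          have "((H j k + (q - 1)) mod q + 1) mod q = (H j k + (q - 1) + 1) mod q"
            by (simp add: mod_add_left_eq mod_Suc_eq)
          also have "H j k + (q - 1) + 1 = H j k + q" using qpos by simp
          finally show ?thesis using True hq unfolding G_def add_ones_def d md n c j_def[symmetric] by simp
        next
          case False
          then show ?thesis using qpos unfolding G_def add_ones_def d md n c j_def[symmetric]
            by (auto simp: mod_Suc)
        qed
      qed
    qed
  qed
  have b: "bij_betw G {..<q^n} (words q n)" unfolding bij_betw_def using inj img by simp
  show ?thesis unfolding quasi_compl_gray_code_def by (rule exI[of _ G], intro conjI b adj' compl)
qed

end
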